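(* Let $\mathcal{F}$ be a fixed hypergraph on $k$ vertices and let $\mathcal{H}$ be a hypergraph on at least $k$ vertices. Then: (1) $\hat{\mathcal{H}}^{k+1}$ has no edge-induced subhypergraph isomorphic to $\mathcal{F}$; (2) if $\mathcal{F}$ has at least one hyperedge, $\hat{\mathcal{H}}^{k+1}$ has no restriction isomorphic to $\mathcal{F}$; (3) if there exists $\ell\le k$ such that $\mathcal{F}$ has strictly fewer than $\binom{k-1}{\ell-1}$ hyperedges of size $\ell$, then $\hat{\mathcal{H}}_{\ell}$ has no subhypergraph isomorphic to $\mathcal{F}$.
   Context: For a hypergraph $\mathcal{H}=(V,\mathcal{F}_0)$: an edge-induced subhypergraph is $(\bigcup_{F\in\mathcal{F}'}F,\mathcal{F}')$ for $\mathcal{F}'\subseteq\mathcal{F}_0$; a restriction is $(V',\{F\in\mathcal{F}_0\mid F\subseteq V'\})$ for $V'\subseteq V$; a subhypergraph is $(V',\{F\cap V'\mid F\in\mathcal{F}_0,\ F\cap V'\neq\emptyset\})$ for $V'\subseteq V$. $\hat{\mathcal{H}}^{m}=(V\cup\{x_1,\dots,x_m\},\{E\cup\{x_1,\dots,x_m\}\mid E\in\mathcal{F}_0\})$ with new vertices $x_1,\dots,x_m$. $\hat{\mathcal{H}}_{\ell}$ has vertex set $V\cup\{x\}$ with $x$ new and hyperedge set $\mathcal{F}_0\cup\{X\cup\{x\}\mid X\subseteq V,\ |X|=\ell\}$. *)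

theory Defs
  imports Main
begin

definition hypergraph :: "'a set \<times> 'a set set \<Rightarrow> bool" where
  "hypergraph H \<longleftrightarrow> finite (fst H) \<and> (\<forall>e\<in>snd H. e \<subseteq> fst H \<and> e \<noteq> {})"

definition hyp_iso :: "'a set \<times> 'a set set \<Rightarrow> 'b set \<times> 'b set set \<Rightarrow> bool" where
  "hyp_iso H G \<longleftrightarrow> (\<exists>f. bij_betw f (fst H) (fst G) \<and> snd G = (\<lambda>e. f ` e) ` snd H)"

definition edge_induced_sub :: "'a set \<times> 'a set set \<Rightarrow> 'a set \<times> 'a set set \<Rightarrow> bool" where
  "edge_induced_sub G H \<longleftrightarrow> (\<exists>F'. F' \<subseteq> snd H \<and> G = (\<Union>F', F'))"

definition restriction :: "'a set \<times> 'a set set \<Rightarrow> 'a set \<times> 'a set set \<Rightarrow> bool" where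
  "restriction G H \<longleftrightarrow> (\<exists>V'. V' \<subseteq> fst H \<and> G = (V', {e \<in> snd H. e \<subseteq> V'}))"

definition subhypergraph :: "'a set \<times> 'a set set \<Rightarrow> 'a set \<times> 'a set set \<Rightarrow> bool" where
  "subhypergraph G H \<longleftrightarrow>
     (\<exists>V'. V' \<subseteq> fst H \<and> G = (V', {e \<inter> V' | e. e \<in> snd H \<and> e \<inter> V' \<noteq> {}}))"

text \<open>\<hat>H^m, with the m new vertices given as a set X (disjoint from V, of cardinality m).\<close>
definition hat_pow :: "'a set \<times> 'a set set \<Rightarrow> 'a set \<Rightarrow> 'a set \<times> 'a set set" where
  "hat_pow H X = (fst H \<union> X, {e \<union> X | e. e \<in> snd H})"

definition hat_ell :: "'a set \<times> 'a set set \<Rightarrow> 'a \<Rightarrow> nat \<Rightarrow> 'a set \<times> 'a set set" where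
  "hat_ell H x l = (fst H \<union> {x}, snd H \<union> {Y \<union> {x} | Y. Y \<subseteq> fst H \<and> card Y = l})"

end

theory Submission
  imports Defs
begin

lemma iso_count:
  assumes iso: "hyp_iso G F" and fin: "finite (fst F)"
    and sF: "\<forall>e\<in>snd F. e \<subseteq> fst F" and sG: "\<forall>e\<in>snd G. e \<subseteq> fst G"
    and S: "S \<subseteq> snd G" and cS: "\<forall>e\<in>S. card e = l"
  shows "card S \<le> card {e\<in>snd F. card e = l}"
proof -
  obtain f where b: "bij_betw f (fst G) (fst F)" and E: "snd F = (\<lambda>e. f ` e) ` snd G"
    using iso unfolding hyp_iso_def by blast
  have inj: "inj_on f (fst G)" using b bij_betw_def by blast
  have injP: "inj_on (image f) S"
    proof (rule inj_on_subset[OF inj_on_image_Pow[OF inj]])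
    show "S \<subseteq> Pow (fst G)" using S sG by blast
  qed
  have "card S = card ((image f) ` S)" using card_image[OF injP] by simp
  also have "\<dots> \<le> card {e\<in>snd F. card e = l}"
  proof (rule card_mono)
    have "{e\<in>snd F. card e = l} \<subseteq> Pow (fst F)" using sF by auto
    then show "finite {e\<in>snd F. card e = l}" using fin finite_subset by blast
    show "(image f) ` S \<subseteq> {e\<in>snd F. card e = l}"
    proof
      fix y assume "y \<in> (image f) ` S"
      then obtain e where e: "e \<in> S" "y = f ` e" by blast
      have "e \<subseteq> fst G" using e S sG by blast
      then have "inj_on f e" using inj inj_on_subset by blast
      then have "card y = card e" using e card_image by blast
      then show "y \<in> {e\<in>snd F. card e = l}" using e E S cS by auto
    qed
  qed
  finally show ?thesis .
qed

theorem lemma7: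
  fixes F :: "'b set \<times> 'b set set" and H :: "'a set \<times> 'a set set"
    and X :: "'a set" and k :: nat
  assumes "hypergraph F" and "card (fst F) = k" and "1 \<le> k"
    and "hypergraph H" and "card (fst H) \<ge> k"
    and "finite X" and "card X = k + 1" and "X \<inter> fst H = {}"
  shows "(\<nexists>G. edge_induced_sub G (hat_pow H X) \<and> hyp_iso G F)
    \<and> (snd F \<noteq> {} \<longrightarrow> (\<nexists>G. restriction G (hat_pow H X) \<and> hyp_iso G F))
    \<and> (\<forall>l x. 1 \<le> l \<and> l \<le> k \<and> x \<notin> fst H
          \<and> card {e \<in> snd F. card e = l} < (k - 1) choose (l - 1)
        \<longrightarrow> (\<nexists>G. subhypergraph G (hat_ell H x l) \<and> hyp_iso G F))"
proof (intro conjI impI allI notI)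
  have finH: "finite (fst H)" using assms(4) unfolding hypergraph_def by blast
  have finF: "finite (fst F)" using assms(1) unfolding hypergraph_def by blast
  have sF: "\<forall>e\<in>snd F. e \<subseteq> fst F" using assms(1) unfolding hypergraph_def by blast
  have sH: "\<forall>e\<in>snd H. e \<subseteq> fst H" using assms(4) unfolding hypergraph_def by blast
  have cardG: "card (fst G) = k" if iso: "hyp_iso G F" for G :: "'a set \<times> 'a set set"
  proof -
    obtain f where "bij_betw f (fst G) (fst F)" using iso unfolding hyp_iso_def by blast
    then show ?thesis using bij_betw_same_card assms(2) by metis
  qed
  have bigX: "card V \<noteq> k" if "X \<subseteq> V" "V \<subseteq> fst H \<union> X" for V
  proof -
    have "finite V" using that finH assms(6) finite_subset by blast
    then have "card X \<le> card V" using that card_mono by blast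
    then show ?thesis using assms(7) by simp
  qed
  {
    assume "\<exists>G. edge_induced_sub G (hat_pow H X) \<and> hyp_iso G F"
    then obtain G F' where G: "F' \<subseteq> snd (hat_pow H X)" "G = (\<Union>F', F')" "hyp_iso G F"
      unfolding edge_induced_sub_def by blast
    have c: "card (\<Union>F') = k" using cardG[OF G(3)] G(2) by simp
    show False
    proof (cases "F' = {}")
      case True then show ?thesis using c assms(3) by simp
    next
      case False
      then obtain e where "e \<in> F'" by blast
      then have "X \<subseteq> \<Union>F'" using G(1) unfolding hat_pow_def by auto
      moreover have "\<Union>F' \<subseteq> fst H \<union> X" using G(1) sH unfolding hat_pow_def by auto
      ultimately show ?thesis using bigX c by blast
    qed
  }
  {
    assume ne: "snd F \<noteq> {}" and "\<exists>G. restriction G (hat_pow H X) \<and> hyp_iso G F"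
    then obtain G V' where G: "V' \<subseteq> fst (hat_pow H X)"
      "G = (V', {e \<in> snd (hat_pow H X). e \<subseteq> V'})" "hyp_iso G F"
      unfolding restriction_def by blast
    have "snd G \<noteq> {}" using G(3) ne unfolding hyp_iso_def by auto
    then obtain e where "e \<in> snd (hat_pow H X)" "e \<subseteq> V'" using G(2) by auto
    then have "X \<subseteq> V'" unfolding hat_pow_def by auto
    moreover have "V' \<subseteq> fst H \<union> X" using G(1) unfolding hat_pow_def by auto
    ultimately show False using bigX cardG[OF G(3)] G(2) by auto
  }
  {
    fix l x
    assume A: "1 \<le> l \<and> l \<le> k \<and> x \<notin> fst H
          \<and> card {e \<in> snd F. card e = l} < (k - 1) choose (l - 1)"
      and "\<exists>G. subhypergraph G (hat_ell H x l) \<and> hyp_iso G F"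
    then obtain G V' where G: "V' \<subseteq> fst (hat_ell H x l)"
      "G = (V', {e \<inter> V' | e. e \<in> snd (hat_ell H x l) \<and> e \<inter> V' \<noteq> {}})" "hyp_iso G F"
      unfolding subhypergraph_def by blast
    have V1: "V' \<subseteq> fst H \<union> {x}" using G(1) unfolding hat_ell_def by auto
    have cV: "card V' = k" using cardG[OF G(3)] G(2) by simp
    have finV: "finite V'" using V1 finH finite_subset by blast
    have edge: "Y \<union> {x} \<in> snd (hat_ell H x l)" if "Y \<subseteq> fst H" "card Y = l" for Y
      using that unfolding hat_ell_def by auto
    have "\<exists>w\<in>V'. \<forall>Z. Z \<subseteq> V' - {w} \<and> card Z = l - 1 \<longrightarrow> insert w Z \<in> snd G"
    proof (cases "x \<in> V'")
      case True
      have "V' - {x} \<subseteq> fst H" using V1 by auto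
      moreover have "card (V' - {x}) < card (fst H)" using True cV assms(5) finV A by auto
      ultimately have "\<not> fst H \<subseteq> V' - {x}" using card_mono[OF finH] by fastforce
      then obtain y where y: "y \<in> fst H" "y \<notin> V' - {x}" by blast
      have yx: "y \<noteq> x" using y A by auto
      show ?thesis
      proof (intro bexI[OF _ True] allI impI)
        fix Z assume Z: "Z \<subseteq> V' - {x} \<and> card Z = l - 1"
        have fZ: "finite Z" using Z finV finite_subset by blast
        have "y \<notin> Z" using Z y yx by auto
        then have cY: "card (insert y Z) = l" using fZ Z A by simp
        have sY: "insert y Z \<subseteq> fst H" using Z y V1 by auto
        have "(insert y Z \<union> {x}) \<inter> V' = insert x Z" using Z y yx True by auto
        moreover have "(insert y Z \<union> {x}) \<inter> V' \<noteq> {}" using True by blast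
        ultimately show "insert x Z \<in> snd G" using edge[OF sY cY] G(2) by (metis (mono_tags, lifting) mem_Collect_eq snd_conv)
      qed
    next
      case False
      have "V' \<noteq> {}" using cV A by auto
      then obtain w where w: "w \<in> V'" by blast
      show ?thesis
      proof (intro bexI[OF _ w] allI impI)
        fix Z assume Z: "Z \<subseteq> V' - {w} \<and> card Z = l - 1"
        have fZ: "finite Z" using Z finV finite_subset by blast
        have "w \<notin> Z" using Z by auto
        then have cY: "card (insert w Z) = l" using fZ Z A by simp
        have sY: "insert w Z \<subseteq> fst H" using Z w V1 False by auto
        have "(insert w Z \<union> {x}) \<inter> V' = insert w Z" using Z w False by auto
        moreover have "(insert w Z \<union> {x}) \<inter> V' \<noteq> {}" using w by blast
        ultimately show "insert w Z \<in> snd G" using edge[OF sY cY] G(2) by (metis (mono_tags, lifting) mem_Collect_eq snd_conv)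
      qed
    qed
    then obtain w where w: "w \<in> V'"
      and W: "\<forall>Z. Z \<subseteq> V' - {w} \<and> card Z = l - 1 \<longrightarrow> insert w Z \<in> snd G" by blast
    define S where "S = insert w ` {Z. Z \<subseteq> V' - {w} \<and> card Z = l - 1}"
    have "inj_on (insert w) {Z. Z \<subseteq> V' - {w} \<and> card Z = l - 1}"
      unfolding inj_on_def by blast
    then have "card S = card {Z. Z \<subseteq> V' - {w} \<and> card Z = l - 1}"
      unfolding S_def by (rule card_image)
    also have "\<dots> = card (V' - {w}) choose (l - 1)"
      using finV by (intro n_subsets) simp
    finally have "card S = card (V' - {w}) choose (l - 1)" .
    then have cS: "card S = (k - 1) choose (l - 1)" using cV w finV by simp
    have "S \<subseteq> snd G" using W unfolding S_def by blast
    moreover have "\<forall>e\<in>S. card e = l"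
    proof
      fix e assume "e \<in> S"
      then obtain Z where Z: "Z \<subseteq> V' - {w}" "card Z = l - 1" "e = insert w Z"
        unfolding S_def by blast
      have "finite Z" using Z finV finite_subset by blast
      moreover have "w \<notin> Z" using Z by blast
      ultimately show "card e = l" using Z A by simp
    qed
    moreover have "\<forall>e\<in>snd G. e \<subseteq> fst G" using G(2) by auto
    ultimately have "card S \<le> card {e\<in>snd F. card e = l}"
      using iso_count[OF G(3) finF sF] by blast
    then show False using cS A by simp
  }
qed

end
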